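(* For all integers $n_0\geq 3$ and $\Delta\geq 3$, there is a $\Delta$-regular graph $G$ of order $n\geq n_0$ with $$Mo(G)\geq \frac{\Delta}{2}n^2-\left(20\Delta^3+12\Delta^2-24\Delta+48\right)n\log_{(\Delta-1)}(n).$$
   Context: All graphs are finite and simple. For a graph $G$ and an edge $uv$ of $G$, $n_G(u,v)$ denotes the number of vertices of $G$ whose distance in $G$ to $u$ is smaller than their distance to $v$. The Mostar index of $G$ is $Mo(G)=\sum_{uv\in E(G)}|n_G(u,v)-n_G(v,u)|$. *)

theory Defs
  imports Complex_Main "HOL-Library.Extended_Nat"
begin

definition simple_graph :: "'a set \<Rightarrow> ('a \<Rightarrow> 'a \<Rightarrow> bool) \<Rightarrow> bool" where
  "simple_graph V E \<longleftrightarrow> finite V \<and> (\<forall>u v. E u v \<longrightarrow> u \<in> V \<and> v \<in> V)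
     \<and> (\<forall>u v. E u v \<longrightarrow> E v u) \<and> (\<forall>u. \<not> E u u)"

definition degree :: "'a set \<Rightarrow> ('a \<Rightarrow> 'a \<Rightarrow> bool) \<Rightarrow> 'a \<Rightarrow> nat" where
  "degree V E v = card {w \<in> V. E v w}"

definition regular :: "'a set \<Rightarrow> ('a \<Rightarrow> 'a \<Rightarrow> bool) \<Rightarrow> nat \<Rightarrow> bool" where
  "regular V E d \<longleftrightarrow> (\<forall>v\<in>V. degree V E v = d)"

definition walk :: "'a set \<Rightarrow> ('a \<Rightarrow> 'a \<Rightarrow> bool) \<Rightarrow> 'a list \<Rightarrow> bool" where
  "walk V E xs \<longleftrightarrow> xs \<noteq> [] \<and> set xs \<subseteq> V \<and> (\<forall>i < length xs - 1. E (xs ! i) (xs ! Suc i))"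

text \<open>Graph distance; \<infinity> if no walk exists.\<close>
definition dist :: "'a set \<Rightarrow> ('a \<Rightarrow> 'a \<Rightarrow> bool) \<Rightarrow> 'a \<Rightarrow> 'a \<Rightarrow> enat" where
  "dist V E u v = (INF xs \<in> {xs. walk V E xs \<and> hd xs = u \<and> last xs = v}. enat (length xs - 1))"

definition n_closer :: "'a set \<Rightarrow> ('a \<Rightarrow> 'a \<Rightarrow> bool) \<Rightarrow> 'a \<Rightarrow> 'a \<Rightarrow> nat" where
  "n_closer V E u v = card {w \<in> V. dist V E w u < dist V E w v}"

text \<open>Mostar index: sum over edges uv of |n(u,v) - n(v,u)|. Each unordered edge
appears twice as an ordered pair with the same (symmetric) summand, so we sum over
ordered pairs and divide by 2 (exact).\<close>
definition mostar :: "'a set \<Rightarrow> ('a \<Rightarrow> 'a \<Rightarrow> bool) \<Rightarrow> nat" where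
  "mostar V E = (\<Sum>(u, v) \<in> {(u, v). E u v}.
      nat \<bar>int (n_closer V E u v) - int (n_closer V E v u)\<bar>) div 2"

end

theory Submission
  imports Defs "HOL-Library.Countable"
begin

lemma walk_single[simp]: "walk V E [u] \<longleftrightarrow> u \<in> V"
  unfolding walk_def by auto

lemma walk_Cons2[simp]: "walk V E (u # v # xs) \<longleftrightarrow> u \<in> V \<and> E u v \<and> walk V E (v # xs)"
proof
  assume h: "walk V E (u # v # xs)"
  have "E ((u#v#xs)!0) ((u#v#xs)! Suc 0)" using h unfolding walk_def by auto
  moreover have "walk V E (v # xs)"
    unfolding walk_def
  proof (intro conjI allI impI)
    show "set (v#xs) \<subseteq> V" using h unfolding walk_def by auto
    fix i assume "i < length (v#xs) - 1"
    then have "Suc i < length (u#v#xs) - 1" by simp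
    then have "E ((u#v#xs)!Suc i) ((u#v#xs)!Suc (Suc i))" using h unfolding walk_def by blast
    then show "E ((v#xs)!i) ((v#xs)!Suc i)" by simp
  qed simp
  ultimately show "u \<in> V \<and> E u v \<and> walk V E (v # xs)" using h unfolding walk_def by auto
next
  assume h: "u \<in> V \<and> E u v \<and> walk V E (v # xs)"
  show "walk V E (u # v # xs)"
    unfolding walk_def
  proof (intro conjI allI impI)
    show "set (u#v#xs) \<subseteq> V" using h unfolding walk_def by auto
    fix i assume i: "i < length (u#v#xs) - 1"
    show "E ((u#v#xs)!i) ((u#v#xs)!Suc i)"
    proof (cases i)
      case 0 then show ?thesis using h by simp
    next
      case (Suc j)
      then have "j < length (v#xs) - 1" using i by simp
      then have "E ((v#xs)!j) ((v#xs)!Suc j)" using h unfolding walk_def by blast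
      then show ?thesis using Suc by simp
    qed
  qed simp
qed

lemma walk_nonempty: "walk V E xs \<Longrightarrow> xs \<noteq> []"
  unfolding walk_def by auto

lemma walk_Cons_Cons: "walk V E (u # xs) \<Longrightarrow> xs \<noteq> [] \<Longrightarrow> E u (hd xs) \<and> walk V E xs"
  by (cases xs) auto

lemma walk_append:
  "walk V E xs \<Longrightarrow> walk V E ys \<Longrightarrow> last xs = hd ys \<Longrightarrow> walk V E (xs @ tl ys)"
proof (induction xs rule: induct_list012)
  case 1 then show ?case by (simp add: walk_def)
next
  case (2 x) then show ?case by (cases ys) auto
next
  case (3 x y zs)
  then have "walk V E ((y # zs) @ tl ys)" by auto
  then show ?case using 3 by auto
qed

lemma walk_rev:
  assumes sym: "\<And>u v. E u v \<Longrightarrow> E v u"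
  shows "walk V E xs \<Longrightarrow> walk V E (rev xs)"
proof (induction xs rule: induct_list012)
  case 1 then show ?case by (simp add: walk_def)
next
  case (2 x) then show ?case by simp
next
  case (3 x y zs)
  have a: "walk V E (rev zs @ [y])" using 3 by auto
  have "y \<in> V" using "3.prems" by (simp add: walk_def)
  then have b: "walk V E [y, x]" using 3 sym by auto
  have "walk V E ((rev zs @ [y]) @ tl [y,x])" by (rule walk_append[OF a b]) simp
  then show ?case by simp
qed

definition wset :: "'a set \<Rightarrow> ('a \<Rightarrow> 'a \<Rightarrow> bool) \<Rightarrow> 'a \<Rightarrow> 'a \<Rightarrow> 'a list set" where
  "wset V E u v = {xs. walk V E xs \<and> hd xs = u \<and> last xs = v}"

lemma dist_wset: "dist V E u v = (INF xs \<in> wset V E u v. enat (length xs - 1))"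
  unfolding dist_def wset_def by simp

lemma dist_le_walk:
  "walk V E xs \<Longrightarrow> hd xs = u \<Longrightarrow> last xs = v \<Longrightarrow> dist V E u v \<le> enat (length xs - 1)"
  unfolding dist_def by (rule INF_lower) auto

lemma dist_lower:
  "(\<And>xs. walk V E xs \<Longrightarrow> hd xs = u \<Longrightarrow> last xs = v \<Longrightarrow> k \<le> enat (length xs - 1)) \<Longrightarrow> k \<le> dist V E u v"
  unfolding dist_def by (rule INF_greatest) auto

lemma dist_witness:
  assumes "dist V E u v \<noteq> \<infinity>"
  shows "\<exists>xs. walk V E xs \<and> hd xs = u \<and> last xs = v \<and> dist V E u v = enat (length xs - 1)"
proof -
  let ?A = "(\<lambda>xs. enat (length xs - 1)) ` wset V E u v"
  have d: "dist V E u v = Inf ?A" by (simp add: dist_wset)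
  have ne: "?A \<noteq> {}"
  proof
    assume "?A = {}" then have "Inf ?A = \<infinity>" by (simp add: top_enat_def)
    then show False using assms d by simp
  qed
  have "Inf ?A \<in> ?A"
  proof -
    obtain a where "a \<in> ?A" using ne by blast
    then have "(LEAST x. x \<in> ?A) \<in> ?A" by (rule LeastI)
    then show ?thesis using ne by (simp add: Inf_enat_def)
  qed
  then show ?thesis using d unfolding wset_def by auto
qed

lemma dist_self: "u \<in> V \<Longrightarrow> dist V E u u = 0"
proof -
  assume "u \<in> V"
  then have "dist V E u u \<le> enat (length [u] - 1)" by (intro dist_le_walk) auto
  then show ?thesis by (simp add: zero_enat_def[symmetric])
qed

lemma dist_edge: "E u v \<Longrightarrow> u \<in> V \<Longrightarrow> v \<in> V \<Longrightarrow> dist V E u v \<le> 1"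
proof -
  assume "E u v" "u \<in> V" "v \<in> V"
  then have "dist V E u v \<le> enat (length [u,v] - 1)" by (intro dist_le_walk) auto
  then show ?thesis by (simp add: one_enat_def)
qed

lemma last_append_tl: "xs \<noteq> [] \<Longrightarrow> ys \<noteq> [] \<Longrightarrow> last xs = hd ys \<Longrightarrow> last (xs @ tl ys) = last ys"
  by (cases ys) (auto simp: last_append)

lemma dist_triangle: "dist V E u w \<le> dist V E u v + dist V E v w"
proof (cases "dist V E u v = \<infinity> \<or> dist V E v w = \<infinity>")
  case True then show ?thesis by auto
next
  case False
  then have f1: "dist V E u v \<noteq> \<infinity>" and f2: "dist V E v w \<noteq> \<infinity>" by auto
  obtain xs where xs: "walk V E xs" "hd xs = u" "last xs = v" "dist V E u v = enat (length xs - 1)"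
    using dist_witness[OF f1] by blast
  obtain ys where ys: "walk V E ys" "hd ys = v" "last ys = w" "dist V E v w = enat (length ys - 1)"
    using dist_witness[OF f2] by blast
  have ne: "xs \<noteq> []" "ys \<noteq> []" using xs(1) ys(1) walk_nonempty by auto
  have lh: "last xs = hd ys" using xs(3) ys(2) by simp
  have w: "walk V E (xs @ tl ys)" using walk_append[OF xs(1) ys(1) lh] .
  have h: "hd (xs @ tl ys) = u" using xs(2) ne(1) by simp
  have l: "last (xs @ tl ys) = w" using last_append_tl[OF ne lh] ys(3) by simp
  have "dist V E u w \<le> enat (length (xs @ tl ys) - 1)"
    using dist_le_walk[OF w h l] .
  also have "length (xs @ tl ys) - 1 = (length xs - 1) + (length ys - 1)"
    using ne by (cases ys; cases xs) auto
  also have "enat ((length xs - 1) + (length ys - 1)) = dist V E u v + dist V E v w"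
    using xs(4) ys(4) by simp
  finally show ?thesis .
qed

lemma dist_sym:
  assumes sym: "\<And>u v. E u v \<Longrightarrow> E v u"
  shows "dist V E u v = dist V E v u"
proof -
  have *: "dist V E a b \<le> dist V E b a" for a b
  proof (rule dist_lower)
    fix xs assume "walk V E xs" "hd xs = b" "last xs = a"
    then have "walk V E (rev xs)" "hd (rev xs) = a" "last (rev xs) = b"
      using walk_rev[OF sym] walk_nonempty by (auto simp: hd_rev last_rev)
    then show "dist V E a b \<le> enat (length xs - 1)" using dist_le_walk by fastforce
  qed
  show ?thesis using *[of u v] *[of v u] by simp
qed

lemma walk_hd_V: "walk V E (u # xs) \<Longrightarrow> u \<in> V"
  by (simp add: walk_def)

lemma walk_last_V: "walk V E xs \<Longrightarrow> last xs \<in> V"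
  unfolding walk_def by auto

lemma walk_parity:
  fixes col :: "'a \<Rightarrow> bool"
  assumes col: "\<And>u v. E u v \<Longrightarrow> col u \<noteq> col v"
  shows "walk V E xs \<Longrightarrow> (col (hd xs) = col (last xs)) = even (length xs - 1)"
proof (induction xs rule: induct_list012)
  case 1 then show ?case by (simp add: walk_def)
next
  case (2 x) then show ?case by simp
next
  case (3 x y zs)
  have e: "E x y" and w: "walk V E (y # zs)" using "3.prems" by auto
  have ih: "(col y = col (last (y # zs))) = even (length zs)" using "3.IH"(2)[OF w] by simp
  have cx: "col x = (\<not> col y)" using col[OF e] by auto
  have l: "last (x#y#zs) = last (y#zs)" by simp
  have len: "length (x#y#zs) - 1 = Suc (length zs)" by simp
  have h: "hd (x#y#zs) = x" by simp
  show ?case unfolding l len even_Suc h using ih cx by blast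
qed

lemma dist_parity:
  fixes col :: "'a \<Rightarrow> bool"
  assumes col: "\<And>u v. E u v \<Longrightarrow> col u \<noteq> col v"
    and d: "dist V E u v = enat k"
  shows "(col u = col v) = even k"
proof -
  have f: "dist V E u v \<noteq> \<infinity>" using d by simp
  obtain xs where xs: "walk V E xs" "hd xs = u" "last xs = v" "dist V E u v = enat (length xs - 1)"
    using dist_witness[OF f] by blast
  have k: "k = length xs - 1" using xs(4) d by simp
  have "(col (hd xs) = col (last xs)) = even (length xs - 1)" using walk_parity[OF col xs(1)] .
  then show ?thesis unfolding xs(2) xs(3) k[symmetric] .
qed

lemma dist_le_1:
  assumes "dist V E u v \<le> 1" "u \<noteq> v"
  shows "E u v"
proof -
  have f: "dist V E u v \<noteq> \<infinity>"
  proof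
    assume "dist V E u v = \<infinity>" then show False using assms(1) by simp
  qed
  obtain xs where xs: "walk V E xs" "hd xs = u" "last xs = v" "dist V E u v = enat (length xs - 1)"
    using dist_witness[OF f] by blast
  have "length xs - 1 \<le> 1" using xs(4) assms(1) by (simp add: one_enat_def)
  moreover have "length xs > 0" using xs(1) walk_nonempty by auto
  ultimately consider "length xs = 1" | "length xs = 2" by linarith
  then show ?thesis
  proof cases
    case 1 then obtain a where "xs = [a]" by (cases xs) auto
    then show ?thesis using xs assms by simp
  next
    case 2 then obtain a b where "xs = [a,b]"
      by (cases xs; cases "tl xs") auto
    then show ?thesis using xs assms by simp
  qed
qed

lemma dist_eq_2:
  assumes "dist V E u v = enat 2"
  shows "\<exists>w. E u w \<and> E w v"
proof -
  have f: "dist V E u v \<noteq> \<infinity>" using assms(1) by auto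
  obtain xs where xs: "walk V E xs" "hd xs = u" "last xs = v" "dist V E u v = enat (length xs - 1)"
    using dist_witness[OF f] by blast
  have "length xs = 3" using xs(4) assms(1) walk_nonempty[OF xs(1)] by (cases xs) auto
  then obtain a b c where "xs = [a,b,c]"
    by (cases xs; cases "tl xs"; cases "tl (tl xs)") auto
  then show ?thesis using xs by auto
qed

lemma separation:
  assumes sym: "\<And>u v. E u v \<Longrightarrow> E v u"
    and bd: "\<And>z t. E z t \<Longrightarrow> z \<in> R \<Longrightarrow> t \<notin> R \<Longrightarrow> z = a \<or> z = b"
    and w: "w \<notin> R" and z: "z \<in> R"
  shows "min (dist V E w a + dist V E a z) (dist V E w b + dist V E b z) \<le> dist V E w z"
proof -
  have aux: "walk V E (w # ys) \<Longrightarrow> w \<notin> R \<Longrightarrow> last (w # ys) \<in> R \<Longrightarrow>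
    \<exists>t\<in>{a,b}. dist V E w t + dist V E t (last (w # ys)) \<le> enat (length ys)" for w ys
  proof (induction ys arbitrary: w)
    case Nil then show ?case by simp
  next
    case (Cons v ys)
    have e: "E w v" and wv: "walk V E (v # ys)" and wV: "w \<in> V" using Cons.prems(1) by auto
    have vV: "v \<in> V" using walk_hd_V[OF wv] .
    have dwv: "dist V E w v \<le> 1" using dist_edge[of E w v V, OF e wV vV] .
    have lst: "last (w # v # ys) = last (v # ys)" by simp
    show ?case
    proof (cases "v \<in> R")
      case True
      have "v = a \<or> v = b" using bd[OF sym[OF e] True Cons.prems(2)] .
      moreover have "dist V E v (last (v # ys)) \<le> enat (length (v # ys) - 1)"
        using dist_le_walk[OF wv] by simp
      ultimately have "v \<in> {a,b}" "dist V E v (last (v # ys)) \<le> enat (length ys)" by auto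
      then have "dist V E w v + dist V E v (last (v # ys)) \<le> 1 + enat (length ys)"
        using dwv by (intro add_mono) auto
      then show ?thesis using \<open>v \<in> {a,b}\<close> lst by (auto simp: one_enat_def)
    next
      case False
      have "last (v # ys) \<in> R" using Cons.prems(3) by simp
      then obtain t where t: "t \<in> {a,b}" "dist V E v t + dist V E t (last (v # ys)) \<le> enat (length ys)"
        using Cons.IH[OF wv False] by blast
      have "dist V E w t \<le> dist V E w v + dist V E v t" by (rule dist_triangle)
      then have "dist V E w t + dist V E t (last (v # ys)) \<le> dist V E w v + (dist V E v t + dist V E t (last (v # ys)))"
        by (metis add.assoc add_right_mono)
      also have "\<dots> \<le> 1 + enat (length ys)" using dwv t(2) by (intro add_mono) auto
      finally show ?thesis using t(1) lst by (auto simp: one_enat_def)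
    qed
  qed
  show ?thesis
  proof (rule dist_lower)
  fix xs assume xs: "walk V E xs" "hd xs = w" "last xs = z"
  then obtain ys where ys: "xs = w # ys" using walk_nonempty by (cases xs) auto
  obtain t where t: "t \<in> {a,b}" "dist V E w t + dist V E t z \<le> enat (length ys)"
    using aux[of w ys] xs ys w z by auto
  have "min (dist V E w a + dist V E a z) (dist V E w b + dist V E b z) \<le> dist V E w t + dist V E t z"
    using t(1) by auto
  also have "\<dots> \<le> enat (length xs - 1)" using t(2) ys by simp
  finally show "min (dist V E w a + dist V E a z) (dist V E w b + dist V E b z) \<le> enat (length xs - 1)" .
qed
qed

lemma reach_dist:
  assumes "E\<^sup>*\<^sup>* u v" "u \<in> V" "\<And>a b. E a b \<Longrightarrow> a \<in> V \<and> b \<in> V"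
  shows "dist V E u v \<noteq> \<infinity>"
  using assms(1)
proof (induction rule: rtranclp_induct)
  case base then show ?case using dist_self[OF assms(2)] by simp
next
  case (step y z)
  have "dist V E y z \<le> 1" using dist_edge[of E y z V, OF step(2)] assms(3)[OF step(2)] by auto
  then have "dist V E y z \<noteq> \<infinity>" by (cases "dist V E y z") auto
  moreover have "dist V E u z \<le> dist V E u y + dist V E y z" by (rule dist_triangle)
  ultimately show ?case using step(3)
    by (cases "dist V E u y"; cases "dist V E y z"; cases "dist V E u z") auto
qed

definition lbl_ok :: "nat \<Rightarrow> nat \<Rightarrow> nat list \<Rightarrow> nat \<Rightarrow> bool" where
  "lbl_ok d D p l \<longleftrightarrow> (if length p < D then l < 4 + 2*d else (l < 2 \<or> (4 \<le> l \<and> l < 4 + 2*d)))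
      \<or> (p = [] \<and> 4 + 2*d \<le> l \<and> l < 4 + 4*d)"

definition Vt :: "nat \<Rightarrow> nat \<Rightarrow> (nat list \<times> nat) set" where
  "Vt d D = {(p,l). set p \<subseteq> {..<d-1} \<and> length p \<le> D \<and> lbl_ok d D p l}"

definition ledge :: "nat \<Rightarrow> bool \<Rightarrow> nat \<Rightarrow> nat \<Rightarrow> bool" where
  "ledge d hb l l' \<longleftrightarrow>
    (l = 0 \<and> l' = 1) \<or>
    (hb \<and> l = 0 \<and> l' = 2) \<or>
    (l = 0 \<and> (\<exists>j. l' = 4+d+j \<and> (hb \<longrightarrow> 1 \<le> j) \<and> j < d-2)) \<or>
    (l = 1 \<and> (\<exists>i. l' = 4+i \<and> i < d-2)) \<or>
    (hb \<and> l = 3 \<and> l' = 4+d) \<or>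
    (\<exists>i j. l = 4+i \<and> l' = 4+d+j \<and> i < d \<and> j < d \<and> \<not>(i = j \<and> i < d-2))"

definition cedge :: "nat \<Rightarrow> nat \<Rightarrow> nat \<Rightarrow> bool" where
  "cedge d l l' \<longleftrightarrow>
    (\<exists>i j. l = 4+2*d+i \<and> l' = 4+3*d+j \<and> i < d \<and> j < d \<and> \<not>(i = 0 \<and> j = 0)) \<or>
    (l = 0 \<and> l' = 4+3*d) \<or> (l = 1 \<and> l' = 4+2*d)"

definition Rd :: "nat \<Rightarrow> nat \<Rightarrow> nat list \<times> nat \<Rightarrow> nat list \<times> nat \<Rightarrow> bool" where
  "Rd d D u v \<longleftrightarrow>
    (fst u = fst v \<and> (ledge d (length (fst u) < D) (snd u) (snd v) \<or> (fst u = [] \<and> cedge d (snd u) (snd v))))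
    \<or> (\<exists>c. fst v = fst u @ [c] \<and> ((snd u = 2 \<and> snd v = 0) \<or> (snd u = 3 \<and> snd v = 1)))"

definition Et :: "nat \<Rightarrow> nat \<Rightarrow> nat list \<times> nat \<Rightarrow> nat list \<times> nat \<Rightarrow> bool" where
  "Et d D u v \<longleftrightarrow> u \<in> Vt d D \<and> v \<in> Vt d D \<and> (Rd d D u v \<or> Rd d D v u)"

definition colL :: "nat \<Rightarrow> nat \<Rightarrow> bool" where
  "colL d l \<longleftrightarrow> (l = 0 \<or> l = 3 \<or> (4 \<le> l \<and> l < 4+d) \<or> (4+2*d \<le> l \<and> l < 4+3*d))"

definition colr :: "nat \<Rightarrow> nat list \<times> nat \<Rightarrow> bool" where
  "colr d u = colL d (snd u)"

lemma Et_sym: "Et d D u v \<Longrightarrow> Et d D v u"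
  unfolding Et_def by auto

lemma Et_V: "Et d D u v \<Longrightarrow> u \<in> Vt d D \<and> v \<in> Vt d D"
  unfolding Et_def by auto

lemma ledge_irrefl: "\<not> ledge d hb l l"
  unfolding ledge_def by auto

lemma cedge_irrefl: "\<not> cedge d l l"
  unfolding cedge_def by auto

lemma Rd_irrefl: "\<not> Rd d D u u"
  unfolding Rd_def using ledge_irrefl cedge_irrefl by auto

lemma Et_irrefl: "\<not> Et d D u u"
  unfolding Et_def using Rd_irrefl by auto

lemma ledge_col: "3 \<le> d \<Longrightarrow> ledge d hb l l' \<Longrightarrow> colL d l \<noteq> colL d l'"
  unfolding ledge_def by (elim disjE exE conjE) (auto simp: colL_def)

lemma cedge_col: "3 \<le> d \<Longrightarrow> cedge d l l' \<Longrightarrow> colL d l \<noteq> colL d l'"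
  unfolding cedge_def by (elim disjE exE conjE) (auto simp: colL_def)

lemma Rd_col: "3 \<le> d \<Longrightarrow> Rd d D u v \<Longrightarrow> colr d u \<noteq> colr d v"
  unfolding Rd_def colr_def
proof (elim disjE exE conjE)
  assume "3 \<le> d" "ledge d (length (fst u) < D) (snd u) (snd v)"
  then show "colL d (snd u) \<noteq> colL d (snd v)" by (rule ledge_col)
next
  assume "3 \<le> d" "cedge d (snd u) (snd v)"
  then show "colL d (snd u) \<noteq> colL d (snd v)" by (rule cedge_col)
qed (auto simp: colL_def)

lemma Et_col: "3 \<le> d \<Longrightarrow> Et d D u v \<Longrightarrow> colr d u \<noteq> colr d v"
  unfolding Et_def using Rd_col by metis

lemma Vt_lbl: "u \<in> Vt d D \<Longrightarrow> snd u < 4 + 4*d"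
  unfolding Vt_def lbl_ok_def by (auto split: if_splits)

lemma finite_Vt: "finite (Vt d D)"
proof -
  have "Vt d D \<subseteq> {p. set p \<subseteq> {..<d-1} \<and> length p \<le> D} \<times> {..<4+4*d}"
    using Vt_lbl unfolding Vt_def by fastforce
  moreover have "finite ({p. set p \<subseteq> {..<d-1} \<and> length p \<le> D} \<times> {..<4+4*d})"
    by (intro finite_cartesian_product finite_lists_length_le) auto
  ultimately show ?thesis by (rule finite_subset)
qed

lemma simple: "simple_graph (Vt d D) (Et d D)"
  unfolding simple_graph_def using finite_Vt Et_sym Et_V Et_irrefl by blast

definition LR :: "nat \<Rightarrow> nat \<Rightarrow> nat list \<Rightarrow> nat \<Rightarrow> nat \<Rightarrow> bool" where
  "LR d D p l l' \<longleftrightarrow> ledge d (length p < D) l l' \<or> ledge d (length p < D) l' l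
     \<or> (p = [] \<and> (cedge d l l' \<or> cedge d l' l))"

definition Lset :: "nat \<Rightarrow> nat \<Rightarrow> nat list \<Rightarrow> nat \<Rightarrow> nat set" where
  "Lset d D p l = {l'. lbl_ok d D p l' \<and> LR d D p l l'}"

definition Nch :: "nat \<Rightarrow> nat \<Rightarrow> nat list \<Rightarrow> nat \<Rightarrow> (nat list \<times> nat) set" where
  "Nch d D p l = (if (l = 2 \<or> l = 3) \<and> length p < D then (\<lambda>c. (p @ [c], l - 2)) ` {..<d-1} else {})"

definition Npa :: "nat list \<Rightarrow> nat \<Rightarrow> (nat list \<times> nat) set" where
  "Npa p l = (if p \<noteq> [] \<and> l < 2 then {(butlast p, l + 2)} else {})"

lemma nbrs_decomp:
  assumes u: "(p,l) \<in> Vt d D"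
  shows "{w \<in> Vt d D. Et d D (p,l) w} = (\<lambda>l'. (p,l')) ` Lset d D p l \<union> Nch d D p l \<union> Npa p l"
proof (intro equalityI subsetI)
  fix w assume w: "w \<in> {w \<in> Vt d D. Et d D (p,l) w}"
  obtain q l' where wq: "w = (q,l')" by (cases w)
  have wV: "(q,l') \<in> Vt d D" and e: "Rd d D (p,l) (q,l') \<or> Rd d D (q,l') (p,l)"
    using w wq unfolding Et_def by auto
  have pV: "set p \<subseteq> {..<d-1}" "length p \<le> D" using u unfolding Vt_def by auto
  have qV: "set q \<subseteq> {..<d-1}" "length q \<le> D" "lbl_ok d D q l'" using wV unfolding Vt_def by auto
  from e show "w \<in> (\<lambda>l'. (p,l')) ` Lset d D p l \<union> Nch d D p l \<union> Npa p l"
  proof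
    assume r: "Rd d D (p,l) (q,l')"
    then consider (loc) "q = p" "ledge d (length p < D) l l' \<or> (p = [] \<and> cedge d l l')"
      | (ch) c where "q = p @ [c]" "(l = 2 \<and> l' = 0) \<or> (l = 3 \<and> l' = 1)"
      unfolding Rd_def by auto
    then show ?thesis
    proof cases
      case loc
      then have "l' \<in> Lset d D p l" using qV unfolding Lset_def LR_def by auto
      then show ?thesis using wq loc by auto
    next
      case ch
      then have "length p < D" "c < d - 1" using qV by auto
      then show ?thesis using wq ch unfolding Nch_def by auto
    qed
  next
    assume r: "Rd d D (q,l') (p,l)"
    then consider (loc) "q = p" "ledge d (length p < D) l' l \<or> (p = [] \<and> cedge d l' l)"
      | (pa) c where "p = q @ [c]" "(l' = 2 \<and> l = 0) \<or> (l' = 3 \<and> l = 1)"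
      unfolding Rd_def by auto
    then show ?thesis
    proof cases
      case loc
      then have "l' \<in> Lset d D p l" using qV unfolding Lset_def LR_def by auto
      then show ?thesis using wq loc by auto
    next
      case pa
      then show ?thesis using wq unfolding Npa_def by auto
    qed
  qed
next
  fix w assume w: "w \<in> (\<lambda>l'. (p,l')) ` Lset d D p l \<union> Nch d D p l \<union> Npa p l"
  have pV: "set p \<subseteq> {..<d-1}" "length p \<le> D" using u unfolding Vt_def by auto
  consider (loc) l' where "w = (p,l')" "l' \<in> Lset d D p l"
    | (ch) c where "w = (p @ [c], l - 2)" "l = 2 \<or> l = 3" "length p < D" "c < d - 1"
    | (pa) "p \<noteq> []" "l < 2" "w = (butlast p, l + 2)"
    using w unfolding Nch_def Npa_def by (auto split: if_splits)
  then show "w \<in> {w \<in> Vt d D. Et d D (p,l) w}"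
  proof cases
    case loc
    then have "w \<in> Vt d D" using pV unfolding Lset_def Vt_def by auto
    moreover have "Rd d D (p,l) w \<or> Rd d D w (p,l)"
      using loc unfolding Lset_def LR_def Rd_def by auto
    ultimately show ?thesis using u unfolding Et_def by auto
  next
    case ch
    then have "w \<in> Vt d D" using pV unfolding Vt_def lbl_ok_def by auto
    moreover have "Rd d D (p,l) w" using ch unfolding Rd_def by auto
    ultimately show ?thesis using u unfolding Et_def by auto
  next
    case pa
    obtain q c where q: "p = q @ [c]" using pa(1) by (metis append_butlast_last_id)
    then have bq: "butlast p = q" by simp
    have "w \<in> Vt d D" using pV pa q unfolding Vt_def lbl_ok_def by auto
    moreover have "Rd d D w (p,l)" using pa q bq unfolding Rd_def by auto
    ultimately show ?thesis using u unfolding Et_def by auto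
  qed
qed

lemma card_decomp:
  assumes u: "(p,l) \<in> Vt d D"
  shows "card {w \<in> Vt d D. Et d D (p,l) w} = card (Lset d D p l) + card (Nch d D p l) + card (Npa p l)"
proof -
  have fL: "finite (Lset d D p l)"
  proof -
    have "Lset d D p l \<subseteq> {..<4+4*d}" unfolding Lset_def lbl_ok_def by (auto split: if_splits)
    then show ?thesis by (rule finite_subset) auto
  qed
  have fC: "finite (Nch d D p l)" unfolding Nch_def by auto
  have fP: "finite (Npa p l)" unfolding Npa_def by auto
  have d1: "((\<lambda>l'. (p,l')) ` Lset d D p l) \<inter> Nch d D p l = {}" unfolding Nch_def by auto
  have d2: "((\<lambda>l'. (p,l')) ` Lset d D p l \<union> Nch d D p l) \<inter> Npa p l = {}"
    unfolding Nch_def Npa_def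
    by (auto simp: length_butlast) (metis append_butlast_last_id length_append_singleton n_not_Suc_n)+
  have "card {w \<in> Vt d D. Et d D (p,l) w} = card ((\<lambda>l'. (p,l')) ` Lset d D p l \<union> Nch d D p l \<union> Npa p l)"
    using nbrs_decomp[OF u] by simp
  also have "\<dots> = card ((\<lambda>l'. (p,l')) ` Lset d D p l \<union> Nch d D p l) + card (Npa p l)"
    using d2 fL fC fP by (intro card_Un_disjoint) auto
  also have "card ((\<lambda>l'. (p,l')) ` Lset d D p l \<union> Nch d D p l) = card ((\<lambda>l'. (p,l')) ` Lset d D p l) + card (Nch d D p l)"
    using d1 fL fC by (intro card_Un_disjoint) auto
  also have "card ((\<lambda>l'. (p,l')) ` Lset d D p l) = card (Lset d D p l)"
    by (rule card_image) (auto simp: inj_on_def)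
  finally show ?thesis .
qed

lemma card_Nch: "card (Nch d D p l) = (if (l = 2 \<or> l = 3) \<and> length p < D then d - 1 else 0)"
  unfolding Nch_def by (auto simp: card_image inj_on_def)

lemma card_Npa: "card (Npa p l) = (if p \<noteq> [] \<and> l < 2 then 1 else 0)"
  unfolding Npa_def by auto

lemma ex_add_iff: "(\<exists>j. x = (a::nat) + j \<and> P j) = (a \<le> x \<and> P (x - a))"
  by (metis add_diff_cancel_left' le_add1 le_add_diff_inverse)

lemma Lset_0:
  assumes d: "3 \<le> d"
  shows "Lset d D p 0 = {1} \<union> (if length p < D then {2} else {})
     \<union> {4+d+(if length p < D then 1 else 0)..<4+d+(d-2)} \<union> (if p = [] then {4+3*d} else {})"
  unfolding Lset_def LR_def ledge_def cedge_def lbl_ok_def using d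
  by (auto split: if_splits simp: ex_add_iff)

lemma Lset_1:
  assumes d: "3 \<le> d"
  shows "Lset d D p 1 = {0} \<union> {4..<4+(d-2)} \<union> (if p = [] then {4+2*d} else {})"
  unfolding Lset_def LR_def ledge_def cedge_def lbl_ok_def using d
  by (auto split: if_splits simp: ex_add_iff)

lemma Lset_2:
  assumes d: "3 \<le> d" and h: "length p < D"
  shows "Lset d D p 2 = {0}"
  unfolding Lset_def LR_def ledge_def cedge_def lbl_ok_def using d h
  by (auto split: if_splits simp: ex_add_iff)

lemma Lset_3:
  assumes d: "3 \<le> d" and h: "length p < D"
  shows "Lset d D p 3 = {4+d}"
  unfolding Lset_def LR_def ledge_def cedge_def lbl_ok_def using d h
  by (auto split: if_splits simp: ex_add_iff)

lemma Lset_X: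
  assumes d: "3 \<le> d" and i: "i < d"
  shows "Lset d D p (4+i) = ({4+d..<4+2*d} - (if i < d-2 then {4+d+i} else {})) \<union> (if i < d-2 then {1} else {})"
  unfolding Lset_def LR_def ledge_def cedge_def lbl_ok_def using d i
  by (auto split: if_splits simp: ex_add_iff)

lemma Lset_Y:
  assumes d: "3 \<le> d" and j: "j < d"
  shows "Lset d D p (4+d+j) = ({4..<4+d} - (if j < d-2 then {4+j} else {}))
     \<union> (if j = 0 then (if length p < D then {3} else {0}) else if j < d-2 then {0} else {})"
  unfolding Lset_def LR_def ledge_def cedge_def lbl_ok_def using d j
  by (auto split: if_splits simp: ex_add_iff)

lemma Lset_X':
  assumes d: "3 \<le> d" and i: "i < d"
  shows "Lset d D [] (4+2*d+i) = ({4+3*d..<4+4*d} - (if i = 0 then {4+3*d} else {})) \<union> (if i = 0 then {1} else {})"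
  unfolding Lset_def LR_def ledge_def cedge_def lbl_ok_def using d i
  by (auto split: if_splits simp: ex_add_iff)

lemma Lset_Y':
  assumes d: "3 \<le> d" and j: "j < d"
  shows "Lset d D [] (4+3*d+j) = ({4+2*d..<4+3*d} - (if j = 0 then {4+2*d} else {})) \<union> (if j = 0 then {0} else {})"
  unfolding Lset_def LR_def ledge_def cedge_def lbl_ok_def using d j
  by (auto split: if_splits simp: ex_add_iff)

lemma cL0: "3 \<le> d \<Longrightarrow> card (Lset d D p 0) = (if p = [] then d else d - 1)"
  by (auto simp add: Lset_0 card_insert_if)

lemma cL1: "3 \<le> d \<Longrightarrow> card (Lset d D p 1) = (if p = [] then d else d - 1)"
  using Lset_1[of d D p] by (auto simp add: card_insert_if)

lemma cLX: "3 \<le> d \<Longrightarrow> i < d \<Longrightarrow> card (Lset d D p (4+i)) = d"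
  by (simp add: Lset_X card_insert_if)

lemma cLY: "3 \<le> d \<Longrightarrow> j < d \<Longrightarrow> card (Lset d D p (4+d+j)) = d"
  by (auto simp add: Lset_Y card_insert_if)

lemma cLX': "3 \<le> d \<Longrightarrow> i < d \<Longrightarrow> card (Lset d D [] (4+2*d+i)) = d"
  by (simp add: Lset_X' card_insert_if)

lemma cLY': "3 \<le> d \<Longrightarrow> j < d \<Longrightarrow> card (Lset d D [] (4+3*d+j)) = d"
  by (simp add: Lset_Y' card_insert_if)


lemma degree_Vt:
  assumes d: "3 \<le> d" and u: "(p,l) \<in> Vt d D"
  shows "card {w \<in> Vt d D. Et d D (p,l) w} = d"
proof -
  have ok: "lbl_ok d D p l" using u unfolding Vt_def by auto
  have cd: "card {w \<in> Vt d D. Et d D (p,l) w} = card (Lset d D p l) + card (Nch d D p l) + card (Npa p l)"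
    by (rule card_decomp[OF u])
  consider "l = 0" | "l = 1" | "l = 2" "length p < D" | "l = 3" "length p < D"
    | i where "l = 4 + i" "i < d" | j where "l = 4 + d + j" "j < d"
    | i where "p = []" "l = 4 + 2*d + i" "i < d" | j where "p = []" "l = 4 + 3*d + j" "j < d"
  proof -
    assume a0: "l = 0 \<Longrightarrow> thesis" and a1: "l = 1 \<Longrightarrow> thesis"
      and a2: "l = 2 \<Longrightarrow> length p < D \<Longrightarrow> thesis" and a3: "l = 3 \<Longrightarrow> length p < D \<Longrightarrow> thesis"
      and aX: "\<And>i. l = 4 + i \<Longrightarrow> i < d \<Longrightarrow> thesis" and aY: "\<And>j. l = 4 + d + j \<Longrightarrow> j < d \<Longrightarrow> thesis"
      and aX': "\<And>i. p = [] \<Longrightarrow> l = 4 + 2*d + i \<Longrightarrow> i < d \<Longrightarrow> thesis"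
      and aY': "\<And>j. p = [] \<Longrightarrow> l = 4 + 3*d + j \<Longrightarrow> j < d \<Longrightarrow> thesis"
    show thesis
    proof (cases "l < 4")
      case True
      then consider "l = 0" | "l = 1" | "l = 2" | "l = 3" by linarith
      then show ?thesis
      proof cases
        case 3 then have "length p < D" using ok unfolding lbl_ok_def by (auto split: if_splits)
        then show ?thesis using a2 3 by blast
      next
        case 4 then have "length p < D" using ok unfolding lbl_ok_def by (auto split: if_splits)
        then show ?thesis using a3 4 by blast
      qed (use a0 a1 in auto)
    next
      case False
      then have "l < 4 + 4*d" using ok unfolding lbl_ok_def by (auto split: if_splits)
      show ?thesis
      proof (cases "l < 4 + d")
        case True then show ?thesis using aX[of "l - 4"] False by auto
      next
        case F1: False
        show ?thesis
        proof (cases "l < 4 + 2*d")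
          case True then show ?thesis using aY[of "l - 4 - d"] F1 by auto
        next
          case F2: False
          then have pn: "p = []" using ok \<open>\<not> l < 4\<close> unfolding lbl_ok_def by (auto split: if_splits)
          show ?thesis
          proof (cases "l < 4 + 3*d")
            case True then show ?thesis using aX'[of "l - 4 - 2*d"] F2 pn by auto
          next
            case False then show ?thesis using aY'[of "l - 4 - 3*d"] pn \<open>l < 4 + 4*d\<close> by auto
          qed
        qed
      qed
    qed
  qed
  then show ?thesis
  proof cases
    case 1 then show ?thesis using cd d by (simp add: cL0 card_Nch card_Npa)
  next
    case 2 then show ?thesis using cd d cL1[OF d, of D p] by (auto simp add: card_Nch card_Npa)
  next
    case 3 then show ?thesis using cd d by (simp add: Lset_2 card_Nch card_Npa)
  next
    case 4 then show ?thesis using cd d by (simp add: Lset_3 card_Nch card_Npa)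
  next
    case (5 i) then show ?thesis using cd d by (simp add: cLX card_Nch card_Npa)
  next
    case (6 j) then show ?thesis using cd d cLY[OF d, of j D p] by (simp add: card_Nch card_Npa)
  next
    case (7 i) then show ?thesis using cd d cLX'[OF d, of i D] by (simp add: card_Nch card_Npa)
  next
    case (8 j) then show ?thesis using cd d cLY'[OF d, of j D] by (simp add: card_Nch card_Npa)
  qed
qed

lemma regular_Vt: "3 \<le> d \<Longrightarrow> regular (Vt d D) (Et d D) d"
  unfolding regular_def degree_def using degree_Vt by fast

definition vp :: "nat \<Rightarrow> nat \<Rightarrow> nat list \<Rightarrow> bool" where
  "vp d D p \<longleftrightarrow> set p \<subseteq> {..<d-1} \<and> length p \<le> D"

lemma Vt_iff: "(p,l) \<in> Vt d D \<longleftrightarrow> vp d D p \<and> lbl_ok d D p l"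
  unfolding Vt_def vp_def by auto

lemma Et_loc: "vp d D p \<Longrightarrow> lbl_ok d D p l \<Longrightarrow> lbl_ok d D p l' \<Longrightarrow> ledge d (length p < D) l l'
   \<Longrightarrow> Et d D (p,l) (p,l')"
  unfolding Et_def Rd_def by (auto simp: Vt_iff)

lemma Et_cl: "lbl_ok d D [] l \<Longrightarrow> lbl_ok d D [] l' \<Longrightarrow> cedge d l l' \<Longrightarrow> Et d D ([],l) ([],l')"
  unfolding Et_def Rd_def by (auto simp: Vt_iff vp_def)

lemma ledge_XY: "i < d \<Longrightarrow> j < d \<Longrightarrow> \<not>(i = j \<and> i < d-2) \<Longrightarrow> ledge d hb (4+i) (4+d+j)"
  unfolding ledge_def by blast

lemma Et_symI: "Et d D u v \<Longrightarrow> Et d D v u" by (rule Et_sym)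

lemma reach_local:
  assumes d: "3 \<le> d" and u: "(p,l) \<in> Vt d D"
  shows "(Et d D)\<^sup>*\<^sup>* (p,l) (p,0)"
proof -
  have vp: "vp d D p" and ok: "lbl_ok d D p l" using u by (auto simp: Vt_iff)
  let ?R = "(Et d D)\<^sup>*\<^sup>*"
  have okX: "lbl_ok d D p (4+i)" if "i < d" for i using that unfolding lbl_ok_def by auto
  have okY: "lbl_ok d D p (4+d+j)" if "j < d" for j using that unfolding lbl_ok_def by auto
  have ok0: "lbl_ok d D p 0" and ok1: "lbl_ok d D p 1" unfolding lbl_ok_def by auto
  have s1: "?R (p,1) (p,0)"
    by (rule r_into_rtranclp, rule Et_symI, rule Et_loc[OF vp ok0 ok1]) (simp add: ledge_def)
  have s2: "?R (p,4) (p,0)"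
  proof -
    have "Et d D (p,4) (p,1)"
      by (rule Et_symI, rule Et_loc[OF vp ok1]) (use okX[of 0] d in \<open>auto simp: ledge_def\<close>)
    then show ?thesis using s1 by (meson converse_rtranclp_into_rtranclp)
  qed
  have s3: "?R (p,4+d+(d-1)) (p,0)"
  proof -
    have "Et d D (p,4+d+(d-1)) (p,4+0)"
      by (rule Et_symI, rule Et_loc[OF vp], rule okX[of 0], use d in simp, rule okY[of "d-1"], use d in simp, rule ledge_XY) (use d in auto)
    then show ?thesis using s2 by (simp add: converse_rtranclp_into_rtranclp)
  qed
  have sX: "?R (p,4+i) (p,0)" if i: "i < d" for i
  proof -
    have "Et d D (p,4+i) (p,4+d+(d-1))"
      by (rule Et_loc[OF vp], rule okX[OF i], rule okY[of "d-1"], use d in simp, rule ledge_XY) (use d i in auto)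
    then show ?thesis using s3 by (simp add: converse_rtranclp_into_rtranclp)
  qed
  have sY: "?R (p,4+d+j) (p,0)" if j: "j < d" for j
  proof -
    have "Et d D (p,4+d+j) (p,4+(d-1))"
      by (rule Et_symI, rule Et_loc[OF vp], rule okX[of "d-1"], use d in simp, rule okY[OF j], rule ledge_XY) (use d j in auto)
    then show ?thesis using sX[of "d-1"] d by (simp add: converse_rtranclp_into_rtranclp)
  qed
  show ?thesis
  proof (cases "l < 4")
    case True
    then consider "l = 0" | "l = 1" | "l = 2" | "l = 3" by linarith
    then show ?thesis
    proof cases
      case 1 then show ?thesis by simp
    next
      case 2 then show ?thesis using s1 by simp
    next
      case 3
      then have h: "length p < D" using ok unfolding lbl_ok_def by (auto split: if_splits)
      have "Et d D (p,2) (p,0)"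
        by (rule Et_symI, rule Et_loc[OF vp ok0]) (use ok 3 h in \<open>auto simp: ledge_def\<close>)
      then show ?thesis using 3 by (simp add: r_into_rtranclp)
    next
      case 4
      then have h: "length p < D" using ok unfolding lbl_ok_def by (auto split: if_splits)
      have "Et d D (p,3) (p,4+d+0)"
        by (rule Et_loc[OF vp]) (use ok 4 h okY[of 0] d in \<open>auto simp: ledge_def\<close>)
      then show ?thesis using 4 sY[of 0] d by (simp add: converse_rtranclp_into_rtranclp)
    qed
  next
    case False
    then have l4: "l < 4 + 4*d" using ok unfolding lbl_ok_def by (auto split: if_splits)
    show ?thesis
    proof (cases "l < 4 + d")
      case True then show ?thesis using sX[of "l-4"] False by auto
    next
      case F1: False
      show ?thesis
      proof (cases "l < 4 + 2*d")
        case True then show ?thesis using sY[of "l-4-d"] F1 by auto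
      next
        case F2: False
        then have pn: "p = []" using ok False unfolding lbl_ok_def by (auto split: if_splits)
        have okc: "lbl_ok d D [] (4+2*d+i)" "lbl_ok d D [] (4+3*d+i)" if "i < d" for i
          using that unfolding lbl_ok_def by auto
        have ok1': "lbl_ok d D [] 1" and ok0': "lbl_ok d D [] 0" unfolding lbl_ok_def by auto
        have c1: "?R ([],4+2*d+0) ([],0)"
        proof -
          have "Et d D ([],4+2*d+0) ([],1)"
            by (rule Et_symI, rule Et_cl[OF ok1' okc(1)]) (use d in \<open>auto simp: cedge_def\<close>)
          then show ?thesis using s1 pn by (simp add: converse_rtranclp_into_rtranclp)
        qed
        have c2: "?R ([],4+3*d+1) ([],0)"
        proof -
          have "Et d D ([],4+3*d+1) ([],4+2*d+0)"
            by (rule Et_symI, rule Et_cl[OF okc(1) okc(2)]) (use d in \<open>auto simp: cedge_def\<close>)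
          then show ?thesis using c1 by (simp add: converse_rtranclp_into_rtranclp)
        qed
        have c3: "?R ([],4+3*d+0) ([],0)"
        proof -
          have "Et d D ([],4+3*d+0) ([],0)"
            by (rule Et_symI, rule Et_cl[OF ok0' okc(2)]) (use d in \<open>auto simp: cedge_def\<close>)
          then show ?thesis by (simp add: r_into_rtranclp)
        qed
        have c4: "?R ([],4+2*d+1) ([],0)"
        proof -
          have "Et d D ([],4+2*d+1) ([],4+3*d+0)"
            by (rule Et_cl[OF okc(1) okc(2)]) (use d in \<open>auto simp: cedge_def\<close>)
          then show ?thesis using c3 by (simp add: converse_rtranclp_into_rtranclp)
        qed
        show ?thesis
        proof (cases "l < 4 + 3*d")
          case True
          define i where "i = l - (4+2*d)"
          have li: "l = 4+2*d+i" "i < d" using True F2 unfolding i_def by auto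
          have "Et d D ([],4+2*d+i) ([],4+3*d+1) \<or> i = 0"
            using okc[of i] okc[of 1] li d by (auto intro!: Et_cl simp: cedge_def)
          then show ?thesis using c1 c2 li pn by (auto simp: converse_rtranclp_into_rtranclp)
        next
          case False
          define j where "j = l - (4+3*d)"
          have lj: "l = 4+3*d+j" "j < d" using False l4 unfolding j_def by auto
          have "Et d D ([],4+3*d+j) ([],4+2*d+1) \<or> j = 0"
            using okc[of j] okc[of 1] lj d by (auto intro!: Et_symI[OF Et_cl] simp: cedge_def)
          then show ?thesis using c3 c4 lj pn by (auto simp: converse_rtranclp_into_rtranclp)
        qed
      qed
    qed
  qed
qed

lemma reach_root:
  assumes d: "3 \<le> d" and u: "(p,l) \<in> Vt d D"
  shows "(Et d D)\<^sup>*\<^sup>* (p,l) ([],0)"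
  using u
proof (induction p arbitrary: l rule: rev_induct)
  case Nil then show ?case using reach_local[OF d] by blast
next
  case (snoc c q)
  have vp: "vp d D (q @ [c])" using snoc.prems by (simp add: Vt_iff)
  then have h: "length q < D" "vp d D q" "c < d - 1" unfolding vp_def by auto
  have q2: "(q,2) \<in> Vt d D" "(q,0) \<in> Vt d D" using h by (auto simp: Vt_iff lbl_ok_def)
  have p0: "(q @ [c], 0) \<in> Vt d D" using vp by (simp add: Vt_iff lbl_ok_def)
  have e1: "Et d D (q @ [c], 0) (q, 2)" unfolding Et_def Rd_def using q2 p0 by auto
  have r1: "(Et d D)\<^sup>*\<^sup>* (q @ [c], l) (q @ [c], 0)" using reach_local[OF d snoc.prems] .
  have r2: "(Et d D)\<^sup>*\<^sup>* (q, 2) (q, 0)" using reach_local[OF d q2(1)] .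
  have r3: "(Et d D)\<^sup>*\<^sup>* (q, 0) ([], 0)" using snoc.IH[OF q2(2)] .
  show ?case using r1 e1 r2 r3 by (meson rtranclp.rtrancl_into_rtrancl rtranclp_trans r_into_rtranclp)
qed

lemma reach_all:
  assumes d: "3 \<le> d" and u: "u \<in> Vt d D" and v: "v \<in> Vt d D"
  shows "(Et d D)\<^sup>*\<^sup>* u v"
proof -
  have a: "(Et d D)\<^sup>*\<^sup>* u ([],0)" using reach_root[OF d, of "fst u" "snd u"] u by simp
  have b: "(Et d D)\<^sup>*\<^sup>* v ([],0)" using reach_root[OF d, of "fst v" "snd v"] v by simp
  have "(Et d D)\<inverse>\<inverse> = Et d D" using Et_sym by (auto intro!: ext)
  then have "(Et d D)\<^sup>*\<^sup>* ([],0) v" using b by (metis rtranclp_converseI)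
  then show ?thesis using a by (meson rtranclp_trans)
qed

lemma dist_fin:
  assumes d: "3 \<le> d" and u: "u \<in> Vt d D" and v: "v \<in> Vt d D"
  shows "dist (Vt d D) (Et d D) u v \<noteq> \<infinity>"
  using reach_dist[OF reach_all[OF d u v] u] Et_V by blast

definition sub :: "nat \<Rightarrow> nat \<Rightarrow> nat list \<Rightarrow> (nat list \<times> nat) set" where
  "sub d D p = {w \<in> Vt d D. \<exists>s. fst w = p @ s}"

lemma snoc_prefix: "(\<exists>s. xs @ [x] = p @ s) \<Longrightarrow> \<not> (\<exists>s. xs = p @ s) \<Longrightarrow> p = xs @ [x]"
proof -
  assume a: "\<exists>s. xs @ [x] = p @ s" and b: "\<not> (\<exists>s. xs = p @ s)"
  then obtain s where s: "xs @ [x] = p @ s" by blast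
  show ?thesis
  proof (cases s rule: rev_cases)
    case Nil then show ?thesis using s by simp
  next
    case (snoc s' y) then have "xs = p @ s'" using s by simp
    then show ?thesis using b by blast
  qed
qed

lemma boundary:
  assumes e: "Et d D z t" and z: "z \<in> sub d D p" and t: "t \<notin> sub d D p"
  shows "z = (p,0) \<or> z = (p,1)"
proof -
  have zV: "z \<in> Vt d D" and tV: "t \<in> Vt d D" using e Et_V by auto
  obtain s where s: "fst z = p @ s" using z unfolding sub_def by auto
  have nt: "\<not> (\<exists>s. fst t = p @ s)" using t tV unfolding sub_def by auto
  have "Rd d D z t \<or> Rd d D t z" using e unfolding Et_def by auto
  then show ?thesis
  proof
    assume "Rd d D z t"
    then have "fst t = fst z \<or> (\<exists>c. fst t = fst z @ [c])" unfolding Rd_def by auto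
    then show ?thesis using s nt by auto
  next
    assume r: "Rd d D t z"
    then consider "fst t = fst z" | c where "fst z = fst t @ [c]" "snd z = 0 \<or> snd z = 1"
      unfolding Rd_def by auto
    then show ?thesis
    proof cases
      case 1 then show ?thesis using s nt by auto
    next
      case (2 c)
      have "\<exists>s. fst t @ [c] = p @ s" using s 2(1) by auto
      then have "p = fst t @ [c]" using snoc_prefix[of "fst t" c p] nt by blast
      then show ?thesis using 2 by (cases z) auto
    qed
  qed
qed

lemma sub_mono: "sub d D (q @ [c]) \<subseteq> sub d D q"
  unfolding sub_def by auto

lemma dfin:
  assumes "3 \<le> d" "u \<in> Vt d D" "v \<in> Vt d D"
  shows "dist (Vt d D) (Et d D) u v = enat (the_enat (dist (Vt d D) (Et d D) u v))"
  using dist_fin[OF assms] by auto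

lemma local_facts:
  assumes d: "3 \<le> d" and p: "p = q @ [c]" "q \<noteq> []" "(p,0) \<in> Vt d D"
  shows "(p,0) \<in> Vt d D" "(p,1) \<in> Vt d D" "(q,0) \<in> Vt d D" "(q,1) \<in> Vt d D" "(q,2) \<in> Vt d D"
    "Et d D (q,0) (q,2)" "Et d D (q,2) (p,0)" "Et d D (q,1) (q,0)" "Et d D (p,0) (p,1)"
    "\<not> Et d D (q,0) (p,1)" "\<And>w. \<not> (Et d D (q,1) w \<and> Et d D w (p,1))"
proof -
  have vp: "vp d D p" using p(3) by (simp add: Vt_iff)
  then have hq: "length q < D" "vp d D q" "c < d - 1" using p(1) unfolding vp_def by auto
  show m: "(p,0) \<in> Vt d D" "(p,1) \<in> Vt d D" "(q,0) \<in> Vt d D" "(q,1) \<in> Vt d D" "(q,2) \<in> Vt d D"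
    using vp hq by (auto simp: Vt_iff lbl_ok_def)
  show "Et d D (q,0) (q,2)" using m hq unfolding Et_def Rd_def ledge_def by auto
  show "Et d D (q,2) (p,0)" using m p unfolding Et_def Rd_def by auto
  show "Et d D (q,1) (q,0)" using m unfolding Et_def Rd_def ledge_def by auto
  show "Et d D (p,0) (p,1)" using m unfolding Et_def Rd_def ledge_def by auto
  show "\<not> Et d D (q,0) (p,1)" using p unfolding Et_def Rd_def by auto
  show "\<not> (Et d D (q,1) w \<and> Et d D w (p,1))" for w
  proof
    assume a: "Et d D (q,1) w \<and> Et d D w (p,1)"
    have w1: "w \<in> {w \<in> Vt d D. Et d D (q,1) w}" using a Et_V[of d D "(q,1)" w] by auto
    have w2: "w \<in> {w \<in> Vt d D. Et d D (p,1) w}" using a Et_V Et_sym by blast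
    have A: "w \<in> (\<lambda>l'. (q,l')) ` Lset d D q 1 \<union> Nch d D q 1 \<union> Npa q 1"
      using w1 unfolding nbrs_decomp[OF m(4)] .
    have B: "w \<in> (\<lambda>l'. (p,l')) ` Lset d D p 1 \<union> Nch d D p 1 \<union> Npa p 1"
      using w2 unfolding nbrs_decomp[OF m(2)] .
    have Np: "Npa p 1 = {(q,3)}" using p unfolding Npa_def by simp
    have Nq: "Npa q 1 = {(butlast q,3)}" using p unfolding Npa_def by simp
    have C1: "Nch d D q 1 = {}" "Nch d D p 1 = {}" unfolding Nch_def by auto
    have L: "3 \<notin> Lset d D q 1" using Lset_1[OF d, of D q] by auto
    have bq: "butlast q \<noteq> q" using p(2) by (metis append_butlast_last_id butlast_snoc length_butlast
         length_append_singleton n_not_Suc_n)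
    have lb: "length (butlast q) < length p" "length q < length p" using p by auto
    show False using A B Np Nq C1 L bq lb by auto
  qed
qed

lemma local_dists:
  assumes d: "3 \<le> d" and p: "p = q @ [c]" "q \<noteq> []" "(p,0) \<in> Vt d D"
  shows "dist (Vt d D) (Et d D) (q,0) (p,0) \<le> 2"
    "dist (Vt d D) (Et d D) (q,1) (p,0) \<le> 3"
    "3 \<le> dist (Vt d D) (Et d D) (q,0) (p,1)"
    "4 \<le> dist (Vt d D) (Et d D) (q,1) (p,1)"
proof -
  note F = local_facts[OF d p]
  let ?V = "Vt d D" and ?E = "Et d D"
  have w1: "walk ?V ?E [(q,0),(q,2),(p,0)]" using F by simp
  have "dist ?V ?E (q,0) (p,0) \<le> enat (length [(q,0),(q,2::nat),(p,0)] - 1)"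
    by (rule dist_le_walk[OF w1]) auto
  then show "dist ?V ?E (q,0) (p,0) \<le> 2" by (simp add: numeral_eq_enat numeral_2_eq_2)
  have w2: "walk ?V ?E [(q,1),(q,0),(q,2),(p,0)]" using F by simp
  have "dist ?V ?E (q,1) (p,0) \<le> enat (length [(q,1),(q,0),(q,2::nat),(p,0)] - 1)"
    by (rule dist_le_walk[OF w2]) auto
  then show "dist ?V ?E (q,1) (p,0) \<le> 3" by (simp add: numeral_eq_enat numeral_3_eq_3)
  have colE: "\<And>u v. ?E u v \<Longrightarrow> colr d u \<noteq> colr d v" using Et_col[OF d] by blast
  obtain k where k: "dist ?V ?E (q,0) (p,1) = enat k" using dfin[OF d F(3) F(2)] by blast
  have "(colr d (q,0) = colr d (p,1)) = even k" by (rule dist_parity[OF colE k])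
  then have ok: "odd k" by (simp add: colr_def colL_def)
  have "k \<noteq> 1"
  proof
    assume "k = 1"
    then have "dist ?V ?E (q,0) (p,1) \<le> 1" using k by (simp add: one_enat_def)
    then have "?E (q,0) (p,1)" by (rule dist_le_1) (use p in auto)
    then show False using F(10) by simp
  qed
  moreover have "k \<noteq> 0" "k \<noteq> 2" using ok by (auto intro: Nat.gr0I)
  ultimately have "3 \<le> k" by linarith
  then show "3 \<le> dist ?V ?E (q,0) (p,1)" using k by (simp add: numeral_eq_enat)
  obtain k where k: "dist ?V ?E (q,1) (p,1) = enat k" using dfin[OF d F(4) F(2)] by blast
  have "(colr d (q,1) = colr d (p,1)) = even k" by (rule dist_parity[OF colE k])
  then have ek: "even k" by (simp add: colr_def colL_def)
  have "k \<noteq> 0"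
  proof
    assume "k = 0"
    then have "dist ?V ?E (q,1) (p,1) \<le> 1" using k by (simp add: zero_enat_def[symmetric])
    then have "?E (q,1) (p,1)" by (rule dist_le_1) (use p in auto)
    then have "colr d (q,1) \<noteq> colr d (p,1)" by (rule colE)
    then show False by (simp add: colr_def colL_def)
  qed
  moreover have "k \<noteq> 2"
  proof
    assume "k = 2"
    then have k2: "dist ?V ?E (q,1) (p,1) = enat 2" using k by simp
    obtain w where "?E (q,1) w \<and> ?E w (p,1)" using dist_eq_2[OF k2] by blast
    then show False using F(11) by blast
  qed
  moreover have "k \<noteq> 1" "k \<noteq> 3" using ek by auto
  ultimately have "4 \<le> k" by linarith
  then show "4 \<le> dist ?V ?E (q,1) (p,1)" using k by (simp add: numeral_eq_enat)
qed

definition dn :: "nat \<Rightarrow> nat \<Rightarrow> nat list \<times> nat \<Rightarrow> nat list \<times> nat \<Rightarrow> nat" where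
  "dn d D u v = the_enat (dist (Vt d D) (Et d D) u v)"

lemma dD: "3 \<le> d \<Longrightarrow> u \<in> Vt d D \<Longrightarrow> v \<in> Vt d D \<Longrightarrow> dist (Vt d D) (Et d D) u v = enat (dn d D u v)"
  unfolding dn_def using dfin by blast

lemma dn_tri:
  assumes "3 \<le> d" "u \<in> Vt d D" "v \<in> Vt d D" "w \<in> Vt d D"
  shows "dn d D u w \<le> dn d D u v + dn d D v w"
  using dist_triangle[of "Vt d D" "Et d D" u w v] assms by (simp add: dD)

lemma key_closer:
  assumes d: "3 \<le> d" and p: "p = q @ [c]" "q \<noteq> []" "(p,0) \<in> Vt d D"
    and w: "w \<in> Vt d D" "w \<notin> sub d D q" and z: "z \<in> sub d D p"
  shows "dn d D w z = dn d D w (p,0) + dn d D (p,0) z"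
proof -
  note F = local_facts[OF d p]
  note L = local_dists[OF d p]
  let ?V = "Vt d D" and ?E = "Et d D"
  have symE: "\<And>u v. ?E u v \<Longrightarrow> ?E v u" by (rule Et_sym)
  have bdQ: "\<And>z t. ?E z t \<Longrightarrow> z \<in> sub d D q \<Longrightarrow> t \<notin> sub d D q \<Longrightarrow> z = (q,0) \<or> z = (q,1)"
    by (rule boundary)
  have bdP: "\<And>z t. ?E z t \<Longrightarrow> z \<in> sub d D p \<Longrightarrow> t \<notin> sub d D p \<Longrightarrow> z = (p,0) \<or> z = (p,1)"
    by (rule boundary)
  have bQ: "(p,1) \<in> sub d D q" using F(2) p unfolding sub_def by auto
  have zV: "z \<in> ?V" using z unfolding sub_def by auto
  have wP: "w \<notin> sub d D p" using w(2) sub_mono p(1) by blast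
  have sQ: "min (dist ?V ?E w (q,0) + dist ?V ?E (q,0) (p,1)) (dist ?V ?E w (q,1) + dist ?V ?E (q,1) (p,1))
      \<le> dist ?V ?E w (p,1)"
    by (rule separation[OF symE bdQ w(2) bQ])
  have sP: "min (dist ?V ?E w (p,0) + dist ?V ?E (p,0) z) (dist ?V ?E w (p,1) + dist ?V ?E (p,1) z)
      \<le> dist ?V ?E w z"
    by (rule separation[OF symE bdP wP z])
  have m: "w \<in> ?V" "(p,0) \<in> ?V" "(p,1) \<in> ?V" "(q,0) \<in> ?V" "(q,1) \<in> ?V" "z \<in> ?V"
    using w F zV by auto
  note dd = dD[OF d]
  have sQ': "min (dn d D w (q,0) + dn d D (q,0) (p,1)) (dn d D w (q,1) + dn d D (q,1) (p,1)) \<le> dn d D w (p,1)"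
    using sQ m by (simp add: dd)
  have sP': "min (dn d D w (p,0) + dn d D (p,0) z) (dn d D w (p,1) + dn d D (p,1) z) \<le> dn d D w z"
    using sP m by (simp add: dd)
  have l1: "dn d D (q,0) (p,0) \<le> 2" "dn d D (q,1) (p,0) \<le> 3" "3 \<le> dn d D (q,0) (p,1)" "4 \<le> dn d D (q,1) (p,1)"
    using L m by (simp_all add: dd numeral_eq_enat)
  have t1: "dn d D w (p,0) \<le> dn d D w (q,0) + dn d D (q,0) (p,0)" using dn_tri[OF d] m by blast
  have t2: "dn d D w (p,0) \<le> dn d D w (q,1) + dn d D (q,1) (p,0)" using dn_tri[OF d] m by blast
  have A: "dn d D w (p,0) < dn d D w (p,1)" using sQ' l1 t1 t2 by linarith
  have eab: "dn d D (p,0) (p,1) \<le> 1" using dist_edge[of ?E "(p,0)" "(p,1)" ?V, OF F(9)] m by (simp add: dd one_enat_def)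
  have t3: "dn d D (p,0) z \<le> dn d D (p,0) (p,1) + dn d D (p,1) z" using dn_tri[OF d] m by blast
  have t4: "dn d D w z \<le> dn d D w (p,0) + dn d D (p,0) z" using dn_tri[OF d] m by blast
  show ?thesis using sP' A eab t3 t4 by linarith
qed

lemma key_diff_aux:
  assumes d: "3 \<le> d" and p: "p = q @ [c]" "q \<noteq> []" "(p,0) \<in> Vt d D"
    and u: "u \<in> sub d D p" and v: "v \<in> sub d D p"
    and lt: "dn d D (p,0) u < dn d D (p,0) v"
  shows "real (card (Vt d D)) - 2 * real (card (sub d D q))
     \<le> real (n_closer (Vt d D) (Et d D) u v) - real (n_closer (Vt d D) (Et d D) v u)"
proof -
  let ?V = "Vt d D" and ?E = "Et d D" and ?Q = "sub d D q"
  have uV: "u \<in> ?V" and vV: "v \<in> ?V" using u v unfolding sub_def by auto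
  have QV: "?Q \<subseteq> ?V" unfolding sub_def by auto
  have fin: "finite ?V" by (rule finite_Vt)
  have cl: "dist ?V ?E w u < dist ?V ?E w v" if w: "w \<in> ?V" "w \<notin> ?Q" for w
  proof -
    have "dn d D w u = dn d D w (p,0) + dn d D (p,0) u" by (rule key_closer[OF d p w u])
    moreover have "dn d D w v = dn d D w (p,0) + dn d D (p,0) v" by (rule key_closer[OF d p w v])
    ultimately have "dn d D w u < dn d D w v" using lt by simp
    then show ?thesis using w uV vV by (simp add: dD[OF d])
  qed
  have S1: "?V - ?Q \<subseteq> {w \<in> ?V. dist ?V ?E w u < dist ?V ?E w v}" using cl by auto
  have S2: "{w \<in> ?V. dist ?V ?E w v < dist ?V ?E w u} \<subseteq> ?Q"
    using cl by (auto dest: less_asym)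
  have c1: "card (?V - ?Q) \<le> n_closer ?V ?E u v"
    unfolding n_closer_def by (rule card_mono) (use fin S1 in auto)
  have c0: "card (?V - ?Q) = card ?V - card ?Q" using QV fin by (simp add: card_Diff_subset finite_subset)
  have cq: "card ?Q \<le> card ?V" using QV fin by (simp add: card_mono)
  have c2: "n_closer ?V ?E v u \<le> card ?Q"
    unfolding n_closer_def by (rule card_mono) (use fin QV S2 finite_subset in auto)
  have "real (card ?V) - real (card ?Q) \<le> real (n_closer ?V ?E u v)" using c1 c0 cq by simp
  then show ?thesis using c2 by linarith
qed

lemma key_diff:
  assumes d: "3 \<le> d" and p: "p = q @ [c]" "q \<noteq> []" "(p,0) \<in> Vt d D"
    and u: "u \<in> sub d D p" and v: "v \<in> sub d D p" and e: "Et d D u v"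
  shows "real (card (Vt d D)) - 2 * real (card (sub d D q))
     \<le> \<bar>real (n_closer (Vt d D) (Et d D) u v) - real (n_closer (Vt d D) (Et d D) v u)\<bar>"
proof -
  let ?V = "Vt d D" and ?E = "Et d D"
  have uV: "u \<in> ?V" and vV: "v \<in> ?V" using u v unfolding sub_def by auto
  have aV: "(p,0) \<in> ?V" using p by simp
  have colE: "\<And>u v. ?E u v \<Longrightarrow> colr d u \<noteq> colr d v" using Et_col[OF d] by blast
  have pu: "(colr d (p,0) = colr d u) = even (dn d D (p,0) u)"
    apply (rule dist_parity[where E="Et d D" and V="Vt d D" and col="colr d"])
     apply (erule colE)
    by (rule dD[OF d aV uV])
  have pv: "(colr d (p,0) = colr d v) = even (dn d D (p,0) v)"
    apply (rule dist_parity[where E="Et d D" and V="Vt d D" and col="colr d"])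
     apply (erule colE)
    by (rule dD[OF d aV vV])
  have "colr d u \<noteq> colr d v" using colE[OF e] .
  then have "dn d D (p,0) u \<noteq> dn d D (p,0) v" using pu pv by auto
  then consider "dn d D (p,0) u < dn d D (p,0) v" | "dn d D (p,0) v < dn d D (p,0) u" by linarith
  then show ?thesis
  proof cases
    case 1 then show ?thesis using key_diff_aux[OF d p u v] by linarith
  next
    case 2 then show ?thesis using key_diff_aux[OF d p v u] by linarith
  qed
qed

definition kap :: "nat \<Rightarrow> nat \<Rightarrow> nat list \<times> nat \<Rightarrow> nat" where
  "kap d D z = card (sub d D (butlast (fst z)))"

lemma sub_Nil: "sub d D [] = Vt d D"
  unfolding sub_def by auto

lemma diff_bound_path:
  assumes d: "3 \<le> d" and pV: "(p,0) \<in> Vt d D" and u: "u \<in> sub d D p" and v: "v \<in> sub d D p"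
    and e: "Et d D u v"
  shows "real (card (Vt d D)) - 2 * real (card (sub d D (butlast p)))
     \<le> \<bar>real (n_closer (Vt d D) (Et d D) u v) - real (n_closer (Vt d D) (Et d D) v u)\<bar>"
proof (cases "p = [] \<or> butlast p = []")
  case True
  then have "sub d D (butlast p) = Vt d D" using sub_Nil by auto
  then show ?thesis by simp
next
  case False
  then have p: "p = butlast p @ [last p]" "butlast p \<noteq> []" by auto
  show ?thesis using key_diff[OF d p(1) p(2) _ u v e] pV p(1) by simp
qed

lemma edge_bound:
  assumes d: "3 \<le> d" and e: "Et d D u v"
  shows "real (card (Vt d D)) - 2 * (real (kap d D u) + real (kap d D v))
     \<le> \<bar>real (n_closer (Vt d D) (Et d D) u v) - real (n_closer (Vt d D) (Et d D) v u)\<bar>"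
proof -
  have uV: "u \<in> Vt d D" and vV: "v \<in> Vt d D" using Et_V[OF e] by auto
  have r: "Rd d D u v \<or> Rd d D v u" using e unfolding Et_def by auto
  have k0: "0 \<le> real (kap d D u)" "0 \<le> real (kap d D v)" by auto
  have pv: "(fst z, 0) \<in> Vt d D" if "z \<in> Vt d D" for z
    using that by (cases z) (auto simp: Vt_iff lbl_ok_def)
  consider "\<exists>s. fst v = fst u @ s" | "\<exists>s. fst u = fst v @ s"
    using r unfolding Rd_def by (metis append_Nil2)
  then show ?thesis
  proof cases
    case 1
    have "u \<in> sub d D (fst u)" "v \<in> sub d D (fst u)" using uV vV 1 unfolding sub_def by auto
    then have "real (card (Vt d D)) - 2 * real (kap d D u)
     \<le> \<bar>real (n_closer (Vt d D) (Et d D) u v) - real (n_closer (Vt d D) (Et d D) v u)\<bar>"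
      using diff_bound_path[OF d pv[OF uV] _ _ e] unfolding kap_def by blast
    then show ?thesis using k0 by (smt (verit))
  next
    case 2
    have "u \<in> sub d D (fst v)" "v \<in> sub d D (fst v)" using uV vV 2 unfolding sub_def by auto
    then have "real (card (Vt d D)) - 2 * real (kap d D v)
     \<le> \<bar>real (n_closer (Vt d D) (Et d D) u v) - real (n_closer (Vt d D) (Et d D) v u)\<bar>"
      using diff_bound_path[OF d pv[OF vV] _ _ e] unfolding kap_def by blast
    then show ?thesis using k0 by (smt (verit))
  qed
qed

lemma mostar_lower:
  assumes d: "3 \<le> d"
  shows "real (mostar (Vt d D) (Et d D)) \<ge>
     real d * real (card (Vt d D))^2 / 2 - 2 * real d * (\<Sum>u\<in>Vt d D. real (kap d D u)) - 1/2"
proof -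
  let ?V = "Vt d D" and ?E = "Et d D"
  let ?Ed = "{(u,v). ?E u v}"
  let ?n = "card ?V"
  let ?g = "\<lambda>(u,v). nat \<bar>int (n_closer ?V ?E u v) - int (n_closer ?V ?E v u)\<bar>"
  let ?S = "\<Sum>x\<in>?Ed. ?g x"
  have Ed: "?Ed = Sigma ?V (\<lambda>u. {v \<in> ?V. ?E u v})" using Et_V by auto
  have fV: "finite ?V" by (rule finite_Vt)
  have fEd: "finite ?Ed" unfolding Ed using fV by auto
  have deg: "card {v \<in> ?V. ?E u v} = d" if "u \<in> ?V" for u
    using degree_Vt[OF d, of "fst u" "snd u" D] that by simp
  have cEd: "card ?Ed = d * ?n" unfolding Ed using fV deg by (simp add: card_SigmaI)
  have s1: "(\<Sum>(u,v)\<in>?Ed. real (kap d D u)) = real d * (\<Sum>u\<in>?V. real (kap d D u))"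
  proof -
    have "(\<Sum>(u,v)\<in>?Ed. real (kap d D u)) = (\<Sum>u\<in>?V. \<Sum>v\<in>{v \<in> ?V. ?E u v}. real (kap d D u))"
      unfolding Ed by (rule sum.Sigma[symmetric]) (use fV in auto)
    also have "\<dots> = (\<Sum>u\<in>?V. real d * real (kap d D u))"
      by (rule sum.cong) (simp_all add: deg)
    also have "\<dots> = real d * (\<Sum>u\<in>?V. real (kap d D u))" by (simp add: sum_distrib_left)
    finally show ?thesis .
  qed
  have sw: "?Ed = prod.swap ` ?Ed" using Et_sym by fastforce
  have s2: "(\<Sum>(u,v)\<in>?Ed. real (kap d D v)) = (\<Sum>(u,v)\<in>?Ed. real (kap d D u))"
  proof -
    have "(\<Sum>(u,v)\<in>?Ed. real (kap d D u)) = (\<Sum>(u,v)\<in>prod.swap ` ?Ed. real (kap d D u))"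
      using sw by simp
    also have "\<dots> = (\<Sum>(u,v)\<in>?Ed. real (kap d D v))"
      by (subst sum.reindex) (auto simp: case_prod_beta)
    finally show ?thesis by simp
  qed
  have rS: "real ?S = (\<Sum>(u,v)\<in>?Ed. \<bar>real (n_closer ?V ?E u v) - real (n_closer ?V ?E v u)\<bar>)"
    by (simp add: case_prod_beta)
  have "(\<Sum>(u,v)\<in>?Ed. real ?n - 2 * (real (kap d D u) + real (kap d D v)))
      \<le> (\<Sum>(u,v)\<in>?Ed. \<bar>real (n_closer ?V ?E u v) - real (n_closer ?V ?E v u)\<bar>)"
    by (rule sum_mono) (use edge_bound[OF d] in auto)
  also have "\<dots> = real ?S" using rS by simp
  finally have A: "(\<Sum>(u,v)\<in>?Ed. real ?n - 2 * (real (kap d D u) + real (kap d D v))) \<le> real ?S" .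
  have B: "(\<Sum>(u,v)\<in>?Ed. real ?n - 2 * (real (kap d D u) + real (kap d D v)))
     = real ?n * real (card ?Ed) - 2 * ((\<Sum>(u,v)\<in>?Ed. real (kap d D u)) + (\<Sum>(u,v)\<in>?Ed. real (kap d D v)))"
    by (simp add: sum_subtractf sum.distrib sum_distrib_left case_prod_beta)
  have C: "real ?S \<ge> real d * real ?n ^ 2 - 4 * real d * (\<Sum>u\<in>?V. real (kap d D u))"
    using A B cEd s1 s2 by (simp add: power2_eq_square algebra_simps)
  have M: "mostar ?V ?E = ?S div 2" unfolding mostar_def by simp
  have "real (?S div 2) \<ge> (real ?S - 1) / 2"
  proof -
    have "?S \<le> 2 * (?S div 2) + 1" by linarith
    then have "real ?S \<le> 2 * real (?S div 2) + 1" by linarith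
    then show ?thesis by simp
  qed
  then show ?thesis using C M by simp
qed

lemma card_filter_sum: "finite A \<Longrightarrow> card {x \<in> A. P x} = (\<Sum>x\<in>A. if P x then 1 else (0::nat))"
  by (simp add: sum.If_cases Int_def conj_commute)

lemma count_ancestors:
  assumes w: "w \<in> Vt d D"
  shows "card {u \<in> Vt d D. w \<in> sub d D (butlast (fst u))} \<le> (4+4*d) + (D+1)*(d-1)*(4+4*d)"
proof -
  let ?L = "4+4*d"
  let ?\<pi> = "fst w"
  let ?B = "({[]} \<times> {..<?L}) \<union> (\<lambda>((k,c),l). (take k ?\<pi> @ [c], l)) ` (({..D} \<times> {..<d-1}) \<times> {..<?L})"
  have sub: "{u \<in> Vt d D. w \<in> sub d D (butlast (fst u))} \<subseteq> ?B"
  proof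
    fix u assume u: "u \<in> {u \<in> Vt d D. w \<in> sub d D (butlast (fst u))}"
    obtain \<sigma> l where ul: "u = (\<sigma>, l)" by (cases u)
    have uV: "(\<sigma>,l) \<in> Vt d D" using u ul by simp
    have lL: "l < ?L" using Vt_lbl[OF uV] by simp
    have vs: "set \<sigma> \<subseteq> {..<d-1}" "length \<sigma> \<le> D" using uV unfolding Vt_def by auto
    obtain s where s: "?\<pi> = butlast \<sigma> @ s" using u ul unfolding sub_def by auto
    show "u \<in> ?B"
    proof (cases "\<sigma> = []")
      case True then show ?thesis using ul lL by auto
    next
      case False
      let ?k = "length (butlast \<sigma>)"
      have tk: "take ?k ?\<pi> = butlast \<sigma>" using s by simp
      have sg: "\<sigma> = take ?k ?\<pi> @ [last \<sigma>]" using tk False by simp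
      have kD: "?k \<le> D" using vs by simp
      have lc: "last \<sigma> < d - 1" using vs(1) False last_in_set by blast
      have "((?k, last \<sigma>), l) \<in> ({..D} \<times> {..<d-1}) \<times> {..<?L}" using kD lc lL by auto
      then have "(take ?k ?\<pi> @ [last \<sigma>], l) \<in> (\<lambda>((k,c),l). (take k ?\<pi> @ [c], l)) ` (({..D} \<times> {..<d-1}) \<times> {..<?L})"
        by force
      then show ?thesis using ul sg by auto
    qed
  qed
  have "card ?B \<le> card ({[]::nat list} \<times> {..<?L}) + card ((\<lambda>((k,c),l). (take k ?\<pi> @ [c], l)) ` (({..D} \<times> {..<d-1}) \<times> {..<?L}))"
    by (rule card_Un_le)
  also have "\<dots> \<le> ?L + card (({..D} \<times> {..<d-1}) \<times> {..<?L})"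
    by (intro add_mono card_image_le) (auto simp: card_cartesian_product)
  also have "\<dots> = ?L + (D+1)*(d-1)*?L" by (simp add: card_cartesian_product)
  finally have "card ?B \<le> ?L + (D+1)*(d-1)*?L" .
  moreover have "finite ?B" by auto
  ultimately show ?thesis using card_mono[OF _ sub] by (meson le_trans)
qed

lemma kap_sum:
  shows "(\<Sum>u\<in>Vt d D. real (kap d D u)) \<le> real (card (Vt d D)) * real ((4+4*d) + (D+1)*(d-1)*(4+4*d))"
proof -
  let ?V = "Vt d D"
  let ?M = "(4+4*d) + (D+1)*(d-1)*(4+4*d)"
  have fV: "finite ?V" by (rule finite_Vt)
  have k: "kap d D u = (\<Sum>w\<in>?V. if w \<in> sub d D (butlast (fst u)) then 1 else (0::nat))" for u
  proof -
    have "sub d D (butlast (fst u)) = {w \<in> ?V. w \<in> sub d D (butlast (fst u))}" unfolding sub_def by auto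
    then show ?thesis unfolding kap_def using card_filter_sum[OF fV] by metis
  qed
  have "(\<Sum>u\<in>?V. kap d D u) = (\<Sum>u\<in>?V. \<Sum>w\<in>?V. if w \<in> sub d D (butlast (fst u)) then 1 else (0::nat))"
    using k by simp
  also have "\<dots> = (\<Sum>w\<in>?V. \<Sum>u\<in>?V. if w \<in> sub d D (butlast (fst u)) then 1 else (0::nat))"
    by (rule sum.swap)
  also have "\<dots> = (\<Sum>w\<in>?V. card {u \<in> ?V. w \<in> sub d D (butlast (fst u))})"
    using card_filter_sum[OF fV] by simp
  also have "\<dots> \<le> (\<Sum>w\<in>?V. ?M)" by (rule sum_mono) (rule count_ancestors)
  also have "\<dots> = card ?V * ?M" by simp
  finally have "(\<Sum>u\<in>?V. kap d D u) \<le> card ?V * ?M" .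
  then have "real (\<Sum>u\<in>?V. kap d D u) \<le> real (card ?V * ?M)" by (rule of_nat_mono)
  then show ?thesis by simp
qed

lemma card_lower:
  assumes d: "3 \<le> d"
  shows "(d-1)^D \<le> card (Vt d D)"
proof -
  have "(\<lambda>p. (p,0::nat)) ` {p. set p \<subseteq> {..<d-1} \<and> length p = D} \<subseteq> Vt d D"
    unfolding Vt_def lbl_ok_def by auto
  then have "card ((\<lambda>p. (p,0::nat)) ` {p. set p \<subseteq> {..<d-1} \<and> length p = D}) \<le> card (Vt d D)"
    by (rule card_mono[OF finite_Vt])
  moreover have "card ((\<lambda>p. (p,0::nat)) ` {p. set p \<subseteq> {..<d-1} \<and> length p = D}) = (d-1)^D"
    by (subst card_image) (auto simp: inj_on_def card_lists_length_eq)
  ultimately show ?thesis by simp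
qed

lemma poly_ineq:
  fixes d D :: real
  assumes d: "3 \<le> d" and D: "1 \<le> D"
  shows "2 * d * ((4+4*d) + (D+1)*(d-1)*(4+4*d)) \<le> (20*d^3 + 12*d^2 - 24*d + 47) * D"
proof -
  have h1: "1 + (D+1)*(d-1) \<le> D*(2*d-1)"
  proof -
    have "d \<le> D * d" using D d by (simp add: mult_le_cancel_right1)
    then show ?thesis by (simp add: algebra_simps)
  qed
  have pos: "0 \<le> 2 * d * (4+4*d)" using d by simp
  have "2 * d * ((4+4*d) + (D+1)*(d-1)*(4+4*d)) = 2 * d * (4+4*d) * (1 + (D+1)*(d-1))"
    by (simp add: algebra_simps)
  also have "\<dots> \<le> 2 * d * (4+4*d) * (D*(2*d-1))" by (rule mult_left_mono[OF h1 pos])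
  also have "\<dots> = (16*d^3 + 8*d^2 - 8*d) * D" by (simp add: algebra_simps power2_eq_square power3_eq_cube)
  also have "\<dots> \<le> (20*d^3 + 12*d^2 - 24*d + 47) * D"
  proof (rule mult_right_mono)
    have "16*d \<le> 4*d^3"
    proof -
      have "3*3 \<le> d*d" by (rule mult_mono) (use d in auto)
      then have "9 \<le> d^2" by (simp add: power2_eq_square)
      then have "9*d \<le> d^2*d" using d by (simp add: mult_right_mono)
      then have "9*d \<le> d^3" by (simp add: power3_eq_cube power2_eq_square)
      then show ?thesis using d by linarith
    qed
    moreover have "0 \<le> 4*d^2" by simp
    ultimately show "16*d^3 + 8*d^2 - 8*d \<le> 20*d^3 + 12*d^2 - 24*d + 47" by linarith
  qed (use D in simp)
  finally show ?thesis .
qed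

lemma concrete:
  assumes d: "3 \<le> d" and D: "1 \<le> D"
  shows "real (mostar (Vt d D) (Et d D)) \<ge> real d / 2 * (real (card (Vt d D)))^2
      - (20 * real d^3 + 12 * real d^2 - 24 * real d + 48)
        * real (card (Vt d D)) * log (real d - 1) (real (card (Vt d D)))"
proof -
  let ?n = "card (Vt d D)"
  let ?N = "real ?n" and ?r = "real d" and ?R = "real D"
  let ?C = "20 * ?r^3 + 12 * ?r^2 - 24 * ?r + 48"
  let ?K = "\<Sum>u\<in>Vt d D. real (kap d D u)"
  have r3: "3 \<le> ?r" using d by simp
  have R1: "1 \<le> ?R" using D by simp
  have nlow: "(d-1)^D \<le> ?n" by (rule card_lower[OF d])
  have "1 \<le> (d-1)^D" using d by simp
  then have n1: "1 \<le> ?N" using nlow by linarith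
  have Mreal: "real ((4+4*d) + (D+1)*(d-1)*(4+4*d)) = (4+4*?r) + (?R+1)*(?r-1)*(4+4*?r)"
    using d by (simp add: of_nat_diff) (simp add: algebra_simps)
  have A: "real (mostar (Vt d D) (Et d D)) \<ge> ?r * ?N^2 / 2 - 2 * ?r * ?K - 1/2"
    by (rule mostar_lower[OF d])
  have K: "?K \<le> ?N * ((4+4*?r) + (?R+1)*(?r-1)*(4+4*?r))"
    using kap_sum[of d D] Mreal by simp
  have P: "2 * ?r * ((4+4*?r) + (?R+1)*(?r-1)*(4+4*?r)) \<le> (20*?r^3 + 12*?r^2 - 24*?r + 47) * ?R"
    by (rule poly_ineq[OF r3 R1])
  have B: "2 * ?r * ?K \<le> ?N * ((20*?r^3 + 12*?r^2 - 24*?r + 47) * ?R)"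
  proof -
    have "2 * ?r * ?K \<le> 2 * ?r * (?N * ((4+4*?r) + (?R+1)*(?r-1)*(4+4*?r)))"
      by (rule mult_left_mono[OF K]) (use r3 in simp)
    also have "\<dots> = ?N * (2 * ?r * ((4+4*?r) + (?R+1)*(?r-1)*(4+4*?r)))" by (simp add: algebra_simps)
    also have "\<dots> \<le> ?N * ((20*?r^3 + 12*?r^2 - 24*?r + 47) * ?R)"
      by (rule mult_left_mono[OF P]) (use n1 in simp)
    finally show ?thesis .
  qed
  have logb: "?R \<le> log (?r - 1) ?N"
  proof -
    have b: "1 < ?r - 1" using r3 by simp
    have "(?r - 1) powr ?R = (?r - 1) ^ D" using b by (simp add: powr_realpow)
    also have "\<dots> = real ((d-1)^D)" using d by (simp add: of_nat_diff)
    also have "\<dots> \<le> ?N" using nlow by simp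
    finally show ?thesis using le_log_iff[OF b] n1 by simp
  qed
  have Cpos: "0 \<le> ?C"
  proof -
    have "24 * ?r \<le> 20 * ?r^3"
    proof -
      have "3*3 \<le> ?r * ?r" by (rule mult_mono) (use r3 in auto)
      then have "24 \<le> 20 * (?r * ?r)" by simp
      then have "24 * ?r \<le> (20 * (?r * ?r)) * ?r" by (rule mult_right_mono) (use r3 in simp)
      then show ?thesis by (simp add: power3_eq_cube mult.assoc)
    qed
    moreover have "0 \<le> 12 * ?r^2" by simp
    ultimately show ?thesis by linarith
  qed
  have NR: "1 \<le> ?N * ?R" using mult_mono[of 1 ?N 1 ?R] n1 R1 by simp
  have E1: "?C * ?N * ?R \<le> ?C * ?N * log (?r - 1) ?N"
    by (rule mult_left_mono[OF logb]) (use Cpos n1 in simp)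
  have E2': "?C * ?N * ?R = ?N * ((20*?r^3 + 12*?r^2 - 24*?r + 47) * ?R) + ?N * ?R"
    by (simp add: algebra_simps)
  have E2: "?N * ((20*?r^3 + 12*?r^2 - 24*?r + 47) * ?R) + 1/2 \<le> ?C * ?N * ?R"
    using NR E2' by linarith
  have eq: "?r / 2 * ?N^2 = ?r * ?N^2 / 2" by simp
  have "?r / 2 * ?N^2 - ?C * ?N * log (?r - 1) ?N \<le> ?r * ?N^2 / 2 - 2 * ?r * ?K - 1/2"
    using B E1 E2 eq by linarith
  then show ?thesis using A by linarith
qed

definition liftE :: "('a \<Rightarrow> 'b) \<Rightarrow> ('a \<Rightarrow> 'a \<Rightarrow> bool) \<Rightarrow> 'b \<Rightarrow> 'b \<Rightarrow> bool" where
  "liftE f E a b \<longleftrightarrow> (\<exists>u v. a = f u \<and> b = f v \<and> E u v)"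

context
  fixes f :: "'a \<Rightarrow> 'b" and V :: "'a set" and E :: "'a \<Rightarrow> 'a \<Rightarrow> bool"
  assumes inj: "inj f"
begin

lemma liftE_f[simp]: "liftE f E (f u) (f v) \<longleftrightarrow> E u v"
  unfolding liftE_def using inj by (auto dest: injD)

lemma walk_map: "walk (f ` V) (liftE f E) (map f xs) \<longleftrightarrow> walk V E xs"
proof -
  have s: "set (map f xs) \<subseteq> f ` V \<longleftrightarrow> set xs \<subseteq> V" using inj by (auto dest: injD)
  show ?thesis unfolding walk_def using s by auto
qed

lemma walk_preimage:
  assumes w: "walk (f ` V) (liftE f E) ys"
  shows "\<exists>xs. ys = map f xs"
proof -
  have "set ys \<subseteq> f ` V" using w unfolding walk_def by auto
  then have "ys = map f (map (inv f) ys)" by (induction ys) (auto simp: f_inv_into_f)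
  then show ?thesis by blast
qed

lemma dist_lift: "dist (f ` V) (liftE f E) (f u) (f v) = dist V E u v"
proof (rule antisym)
  show "dist (f ` V) (liftE f E) (f u) (f v) \<le> dist V E u v"
  proof (rule dist_lower)
    fix xs assume xs: "walk V E xs" "hd xs = u" "last xs = v"
    have ne: "xs \<noteq> []" using walk_nonempty[OF xs(1)] .
    have "walk (f ` V) (liftE f E) (map f xs)" using xs(1) walk_map by simp
    moreover have "hd (map f xs) = f u" "last (map f xs) = f v" using xs ne by (auto simp: hd_map last_map)
    ultimately have "dist (f ` V) (liftE f E) (f u) (f v) \<le> enat (length (map f xs) - 1)"
      by (rule dist_le_walk)
    then show "dist (f ` V) (liftE f E) (f u) (f v) \<le> enat (length xs - 1)" by simp
  qed
next
  show "dist V E u v \<le> dist (f ` V) (liftE f E) (f u) (f v)"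
  proof (rule dist_lower)
    fix ys assume ys: "walk (f ` V) (liftE f E) ys" "hd ys = f u" "last ys = f v"
    obtain xs where xs: "ys = map f xs" using walk_preimage[OF ys(1)] by blast
    have ne: "xs \<noteq> []" using walk_nonempty[OF ys(1)] xs by auto
    have w: "walk V E xs" using ys(1) xs walk_map by simp
    have "hd xs = u" "last xs = v" using ys xs ne inj by (auto simp: hd_map last_map dest: injD)
    then have "dist V E u v \<le> enat (length xs - 1)" using dist_le_walk[OF w] by blast
    then show "dist V E u v \<le> enat (length ys - 1)" using xs by simp
  qed
qed

lemma n_closer_lift: "n_closer (f ` V) (liftE f E) (f u) (f v) = n_closer V E u v"
proof -
  have img: "{a \<in> f ` V. Q a} = f ` {w \<in> V. Q (f w)}" for Q by blast
  have "{a \<in> f ` V. dist (f ` V) (liftE f E) a (f u) < dist (f ` V) (liftE f E) a (f v)}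
      = f ` {w \<in> V. dist V E w u < dist V E w v}"
    unfolding img dist_lift ..
  moreover have "card (f ` {w \<in> V. dist V E w u < dist V E w v}) = card {w \<in> V. dist V E w u < dist V E w v}"
    by (rule card_image[OF inj_on_subset[OF inj subset_UNIV]])
  ultimately show ?thesis unfolding n_closer_def by simp
qed

lemma mostar_lift: "mostar (f ` V) (liftE f E) = mostar V E"
proof -
  let ?g = "\<lambda>(u,v). (f u, f v)"
  have eq: "{(a,b). liftE f E a b} = ?g ` {(u,v). E u v}" unfolding liftE_def by auto
  have inj2: "inj_on ?g {(u,v). E u v}" using inj unfolding inj_on_def by (auto dest: injD)
  have "(\<Sum>(a,b)\<in>{(a,b). liftE f E a b}. nat \<bar>int (n_closer (f ` V) (liftE f E) a b) - int (n_closer (f ` V) (liftE f E) b a)\<bar>)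
      = (\<Sum>(a,b)\<in>?g ` {(u,v). E u v}. nat \<bar>int (n_closer (f ` V) (liftE f E) a b) - int (n_closer (f ` V) (liftE f E) b a)\<bar>)"
    using eq by simp
  also have "\<dots> = (\<Sum>(u,v)\<in>{(u,v). E u v}. nat \<bar>int (n_closer V E u v) - int (n_closer V E v u)\<bar>)"
    by (subst sum.reindex[OF inj2]) (simp add: case_prod_beta n_closer_lift)
  finally show ?thesis unfolding mostar_def by simp
qed

lemma simple_lift: "simple_graph V E \<Longrightarrow> simple_graph (f ` V) (liftE f E)"
  unfolding simple_graph_def liftE_def using inj by (auto dest: injD) blast

lemma regular_lift: "simple_graph V E \<Longrightarrow> regular V E k \<Longrightarrow> regular (f ` V) (liftE f E) k"
proof -
  assume s: "simple_graph V E" and r: "regular V E k"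
  show ?thesis unfolding regular_def degree_def
  proof
    fix a assume "a \<in> f ` V"
    then obtain v where v: "v \<in> V" "a = f v" by auto
    have img: "{a \<in> f ` V. Q a} = f ` {w \<in> V. Q (f w)}" for Q by blast
    have "{w \<in> f ` V. liftE f E (f v) w} = f ` {w \<in> V. E v w}" unfolding img liftE_f ..
    then have "card {w \<in> f ` V. liftE f E a w} = card {w \<in> V. E v w}"
      using v card_image[OF inj_on_subset[OF inj subset_UNIV]] by metis
    then show "card {w \<in> f ` V. liftE f E a w} = k" using r v unfolding regular_def degree_def by simp
  qed
qed

lemma card_lift: "card (f ` V) = card V"
  by (rule card_image[OF inj_on_subset[OF inj subset_UNIV]])

end

theorem theorem1:
  fixes n0 \<Delta> :: nat
  assumes "n0 \<ge> 3" and "\<Delta> \<ge> 3"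
  shows "\<exists>(V :: nat set) E. simple_graph V E \<and> regular V E \<Delta> \<and> card V \<ge> n0 \<and>
    real (mostar V E) \<ge> real \<Delta> / 2 * (real (card V))^2
      - (20 * real \<Delta>^3 + 12 * real \<Delta>^2 - 24 * real \<Delta> + 48)
        * real (card V) * log (real \<Delta> - 1) (real (card V))"
proof -
  let ?V0 = "Vt \<Delta> n0" and ?E0 = "Et \<Delta> n0"
  let ?f = "to_nat :: nat list \<times> nat \<Rightarrow> nat"
  have inj: "inj ?f" by simp
  have d: "3 \<le> \<Delta>" using assms by simp
  have D: "1 \<le> n0" using assms by simp
  have s0: "simple_graph ?V0 ?E0" by (rule simple)
  have s1: "simple_graph (?f ` ?V0) (liftE ?f ?E0)" by (rule simple_lift[OF inj s0])
  have r1: "regular (?f ` ?V0) (liftE ?f ?E0) \<Delta>" by (rule regular_lift[OF inj s0 regular_Vt[OF d]])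
  have c: "card (?f ` ?V0) = card ?V0" by (rule card_lift[OF inj])
  have m: "mostar (?f ` ?V0) (liftE ?f ?E0) = mostar ?V0 ?E0" by (rule mostar_lift[OF inj])
  have "n0 < 2 ^ n0" by (rule less_exp)
  also have "(2::nat) ^ n0 \<le> (\<Delta> - 1) ^ n0" by (rule power_mono) (use d in auto)
  also have "\<dots> \<le> card ?V0" by (rule card_lower[OF d])
  finally have cn: "n0 \<le> card (?f ` ?V0)" using c by simp
  have b: "real (mostar ?V0 ?E0) \<ge> real \<Delta> / 2 * (real (card ?V0))^2
      - (20 * real \<Delta>^3 + 12 * real \<Delta>^2 - 24 * real \<Delta> + 48)
        * real (card ?V0) * log (real \<Delta> - 1) (real (card ?V0))"
    by (rule concrete[OF d D])
  show ?thesis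
    by (rule exI[of _ "?f ` ?V0"], rule exI[of _ "liftE ?f ?E0"]) (use s1 r1 cn b c m in simp)
qed

end
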